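(* Fix $n\ge2$ and $B>0$. Let $\pi_0$ be any prior distribution on $\Theta(B)$; draw $(\tau,\mu_{\mathrm{L}},\mu_{\mathrm{R}})\sim\pi_0$, $\boldsymbol{X}\sim P(n,\tau,\mu_{\mathrm{L}},\mu_{\mathrm{R}})$, and define $Y=\mathbb{1}\{\mu_{\mathrm{L}}\ne\mu_{\mathrm{R}}\}$. Then for $\lambda^*=B\sqrt{3n}/6$, the classifier $h^{\mathrm{CUSUM}_*}_{\lambda^*}(\boldsymbol{x})=\mathbb{1}\{\max_{t\in T_0}|\boldsymbol{v}_t^\top\boldsymbol{x}|>\lambda^*\}$ satisfies $\mathbb{P}(h^{\mathrm{CUSUM}_*}_{\lambda^*}(\boldsymbol{X})\ne Y)\le 2\lfloor\log_2(n)\rfloor e^{-nB^2/24}$.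
   Context: $P(n,\tau,\mu_{\mathrm{L}},\mu_{\mathrm{R}})$ is the law of $N_n(\boldsymbol{\mu},I_n)$ with $\mu_i=\mu_{\mathrm{L}}\mathbb{1}\{i\le\tau\}+\mu_{\mathrm{R}}\mathbb{1}\{i>\tau\}$. $\Theta(B)=\{(\tau,\mu_{\mathrm{L}},\mu_{\mathrm{R}})\in[n-1]\times\mathbb{R}^2:|\mu_{\mathrm{L}}-\mu_{\mathrm{R}}|\sqrt{\tau(n-\tau)}/n\in\{0\}\cup(B,\infty)\}$. For $t\in[n-1]$, $\boldsymbol{v}_t=\bigl(\sqrt{\tfrac{n-t}{tn}}\boldsymbol{1}_t^\top,-\sqrt{\tfrac{t}{(n-t)n}}\boldsymbol{1}_{n-t}^\top\bigr)^\top$. With $Q=\lfloor\log_2(n/2)\rfloor$, $T_0=\{2^q:0\le q\le Q\}\cup\{n-2^q:0\le q\le Q\}$. *)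

theory Defs
  imports "HOL-Probability.Probability"
begin

text \<open>Parameters theta = (tau, muL, muR). Observations x :: nat => real indexed by {1..n}.\<close>

type_synonym param = "nat \<times> real \<times> real"

definition mean_vec :: "param \<Rightarrow> nat \<Rightarrow> real" where
  "mean_vec \<theta> i = (case \<theta> of (\<tau>, muL, muR) \<Rightarrow> if i \<le> \<tau> then muL else muR)"

definition obs_space :: "nat \<Rightarrow> (nat \<Rightarrow> real) measure" where
  "obs_space n = PiM {1..n} (\<lambda>_. borel)"

definition Pcp :: "nat \<Rightarrow> param \<Rightarrow> (nat \<Rightarrow> real) measure" where
  "Pcp n \<theta> = PiM {1..n} (\<lambda>i. density lborel (normal_density (mean_vec \<theta> i) 1))"

definition param_space :: "param measure" where
  "param_space = count_space UNIV \<Otimes>\<^sub>M (borel \<Otimes>\<^sub>M borel)"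

definition Theta :: "nat \<Rightarrow> real \<Rightarrow> param set" where
  "Theta n B = {(\<tau>, muL, muR). \<tau> \<in> {1..n-1} \<and>
      (let s = \<bar>muL - muR\<bar> * sqrt (real \<tau> * real (n - \<tau>)) / real n in s = 0 \<or> s > B)}"

definition vdot :: "nat \<Rightarrow> nat \<Rightarrow> (nat \<Rightarrow> real) \<Rightarrow> real" where
  "vdot n t x = (\<Sum>i=1..t. sqrt (real (n - t) / (real t * real n)) * x i)
              - (\<Sum>i=t+1..n. sqrt (real t / (real (n - t) * real n)) * x i)"

definition Qn :: "nat \<Rightarrow> nat" where
  "Qn n = nat \<lfloor>log 2 (real n / 2)\<rfloor>"

definition T0 :: "nat \<Rightarrow> nat set" where
  "T0 n = {2 ^ q | q. q \<le> Qn n} \<union> {n - 2 ^ q | q. q \<le> Qn n}"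

definition h_cusum :: "nat \<Rightarrow> real \<Rightarrow> (nat \<Rightarrow> real) \<Rightarrow> bool" where
  "h_cusum n lam x = (Max ((\<lambda>t. \<bar>vdot n t x\<bar>) ` T0 n) > lam)"

definition label :: "param \<Rightarrow> bool" where
  "label \<theta> = (case \<theta> of (\<tau>, muL, muR) \<Rightarrow> muL \<noteq> muR)"

definition joint :: "nat \<Rightarrow> param measure \<Rightarrow> (param \<times> (nat \<Rightarrow> real)) measure" where
  "joint n \<pi>0 = \<pi>0 \<bind> (\<lambda>\<theta>. distr (Pcp n \<theta>) (\<pi>0 \<Otimes>\<^sub>M obs_space n) (\<lambda>x. (\<theta>, x)))"

end

theory Submission
  imports Defs
begin

lemma nn_std_normal: "(\<integral>\<^sup>+x. ennreal (std_normal_density x) \<partial>lborel) = 1"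
  by (subst nn_integral_eq_integral) auto

lemma gauss_tail:
  fixes c :: real assumes c: "0 \<le> c"
  shows "(\<integral>\<^sup>+x. ennreal (std_normal_density x) * indicator {x. c < \<bar>x\<bar>} x \<partial>lborel)
          \<le> ennreal (exp (- c\<^sup>2 / 2))"
proof -
  define f where "f = (\<lambda>y::real. ennreal (std_normal_density y) * indicator {0<..} y)"
  define g where "g = (\<lambda>y::real. ennreal (std_normal_density y) * indicator {..<0} y)"
  have fm[measurable]: "f \<in> borel_measurable borel" unfolding f_def by measurable
  have gm[measurable]: "g \<in> borel_measurable borel" unfolding g_def by measurable
  have pw: "ennreal (std_normal_density x) * indicator {x. c < \<bar>x\<bar>} x
      \<le> ennreal (exp (- c\<^sup>2 / 2)) * (f (- c + 1 * x) + g (c + 1 * x))" for x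
  proof (cases "c < \<bar>x\<bar>")
    case False then show ?thesis by simp
  next
    case True
    show ?thesis
    proof (cases "x > c")
      case xc: True
      have "std_normal_density x = std_normal_density (x - c) * exp (- c * x + c\<^sup>2/2)"
        unfolding std_normal_density_def mult.assoc exp_add[symmetric]
        by (rule arg_cong[where f="\<lambda>u. 1 / sqrt (2 * pi) * exp u"]) (simp add: power2_eq_square field_simps)
      also have "\<dots> \<le> std_normal_density (x - c) * exp (- c\<^sup>2/2)"
        using c xc by (intro mult_left_mono) (auto simp: power2_eq_square intro!: mult_left_mono)
      finally have le: "std_normal_density x \<le> exp (- c\<^sup>2/2) * std_normal_density (x - c)"
        by (simp add: mult.commute)
      have "ennreal (std_normal_density x) * indicator {x. c < \<bar>x\<bar>} x = ennreal (std_normal_density x)"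
        using True by simp
      also have "\<dots> \<le> ennreal (exp (- c\<^sup>2/2) * std_normal_density (x - c))"
        using le by (rule ennreal_leI)
      also have "\<dots> = ennreal (exp (- c\<^sup>2/2)) * f (- c + 1 * x)"
        using xc by (simp add: f_def ennreal_mult)
      also have "\<dots> \<le> ennreal (exp (- c\<^sup>2 / 2)) * (f (- c + 1 * x) + g (c + 1 * x))"
        by (intro mult_left_mono) auto
      finally show ?thesis .
    next
      case xc: False
      with True have xc: "x < - c" by auto
      have "std_normal_density x = std_normal_density (x + c) * exp (c * x + c\<^sup>2/2)"
        unfolding std_normal_density_def mult.assoc exp_add[symmetric]
        by (rule arg_cong[where f="\<lambda>u. 1 / sqrt (2 * pi) * exp u"]) (simp add: power2_eq_square field_simps)
      also have "\<dots> \<le> std_normal_density (x + c) * exp (- c\<^sup>2/2)"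
      proof -
        have "c * x \<le> c * (- c)" using c xc by (intro mult_left_mono) auto
        then show ?thesis by (intro mult_left_mono) (auto simp: power2_eq_square)
      qed
      finally have le: "std_normal_density x \<le> exp (- c\<^sup>2/2) * std_normal_density (x + c)"
        by (simp add: mult.commute)
      have "ennreal (std_normal_density x) * indicator {x. c < \<bar>x\<bar>} x = ennreal (std_normal_density x)"
        using True by simp
      also have "\<dots> \<le> ennreal (exp (- c\<^sup>2/2) * std_normal_density (x + c))"
        using le by (rule ennreal_leI)
      also have "\<dots> = ennreal (exp (- c\<^sup>2/2)) * g (c + 1 * x)"
        using xc by (simp add: g_def ennreal_mult add.commute)
      also have "\<dots> \<le> ennreal (exp (- c\<^sup>2 / 2)) * (f (- c + 1 * x) + g (c + 1 * x))"
        by (intro mult_left_mono) auto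
      finally show ?thesis .
    qed
  qed
  have "(\<integral>\<^sup>+x. ennreal (std_normal_density x) * indicator {x. c < \<bar>x\<bar>} x \<partial>lborel)
      \<le> (\<integral>\<^sup>+x. ennreal (exp (- c\<^sup>2 / 2)) * (f (- c + 1 * x) + g (c + 1 * x)) \<partial>lborel)"
    by (intro nn_integral_mono pw)
  also have "\<dots> = ennreal (exp (- c\<^sup>2 / 2)) * ((\<integral>\<^sup>+x. f (- c + 1 * x) \<partial>lborel) + (\<integral>\<^sup>+x. g (c + 1 * x) \<partial>lborel))"
    by (subst nn_integral_cmult) (auto simp: nn_integral_add)
  also have "(\<integral>\<^sup>+x. f (- c + 1 * x) \<partial>lborel) + (\<integral>\<^sup>+x. g (c + 1 * x) \<partial>lborel) \<le> 1"
  proof -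
    have "(\<integral>\<^sup>+x. f (- c + 1 * x) \<partial>lborel) = (\<integral>\<^sup>+x. f x \<partial>lborel)"
      using nn_integral_real_affine[OF fm, of 1 "-c"] by simp
    moreover have "(\<integral>\<^sup>+x. g (c + 1 * x) \<partial>lborel) = (\<integral>\<^sup>+x. g x \<partial>lborel)"
      using nn_integral_real_affine[OF gm, of 1 "c"] by simp
    moreover have "(\<integral>\<^sup>+x. f x \<partial>lborel) + (\<integral>\<^sup>+x. g x \<partial>lborel) = (\<integral>\<^sup>+x. f x + g x \<partial>lborel)"
      by (simp add: nn_integral_add)
    moreover have "\<dots> \<le> (\<integral>\<^sup>+x. ennreal (std_normal_density x) \<partial>lborel)"
      by (intro nn_integral_mono) (auto simp: f_def g_def indicator_def)
    ultimately show ?thesis using nn_std_normal by simp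
  qed
  finally show ?thesis by (simp add: mult_left_mono)
qed

definition stdN :: "real measure" where "stdN = density lborel std_normal_density"
definition Zn :: "nat \<Rightarrow> (nat \<Rightarrow> real) measure" where "Zn n = PiM {1..n} (\<lambda>_. stdN)"
definition shv :: "nat \<Rightarrow> param \<Rightarrow> (nat \<Rightarrow> real) \<Rightarrow> (nat \<Rightarrow> real)" where
  "shv n \<theta> z = (\<lambda>i\<in>{1..n}. z i + mean_vec \<theta> i)"

lemma prob_stdN: "prob_space stdN"
  unfolding stdN_def by (rule prob_space_normal_density) simp
lemma sets_stdN[simp, measurable_cong]: "sets stdN = sets borel"
  by (simp add: stdN_def)
lemma space_stdN[simp]: "space stdN = UNIV"
  by (simp add: stdN_def)
lemma prob_Zn: "prob_space (Zn n)"
  unfolding Zn_def by (intro prob_space_PiM prob_stdN)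

lemma shift1:
  assumes A[measurable]: "A \<in> sets borel"
  shows "emeasure stdN ((\<lambda>x. x + c) -` A \<inter> space stdN) = emeasure (density lborel (normal_density c 1)) A"
proof -
  have pre: "(\<lambda>x. x + c) -` A \<in> sets borel"
    by (rule measurable_sets_borel[OF _ A]) simp
  have "emeasure stdN ((\<lambda>x. x + c) -` A \<inter> space stdN) = (\<integral>\<^sup>+x. ennreal (std_normal_density x) * indicator A (x + c) \<partial>lborel)"
    unfolding stdN_def
    using pre by (subst emeasure_density) (auto intro!: nn_integral_cong simp: indicator_def)
  also have "\<dots> = (\<integral>\<^sup>+x. ennreal (normal_density c 1 (c + 1 * x)) * indicator A (c + 1 * x) \<partial>lborel)"
    by (intro nn_integral_cong) (simp add: normal_density_def add.commute)
  also have "\<dots> = (\<integral>\<^sup>+x. ennreal (normal_density c 1 x) * indicator A x \<partial>lborel)"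
    using nn_integral_real_affine[of "\<lambda>x. ennreal (normal_density c 1 x) * indicator A x" 1 c] pre A by simp
  also have "\<dots> = emeasure (density lborel (normal_density c 1)) A"
    by (subst emeasure_density) auto
  finally show ?thesis .
qed

lemma shv_meas[measurable]: "shv n \<theta> \<in> measurable (Zn n) (obs_space n)"
  unfolding shv_def Zn_def obs_space_def by (intro measurable_restrict) simp

lemma Pcp_eq: "Pcp n \<theta> = distr (Zn n) (obs_space n) (shv n \<theta>)"
proof -
  let ?M = "\<lambda>i. density lborel (normal_density (mean_vec \<theta> i) 1)"
  interpret P: product_prob_space ?M by (rule product_prob_spaceI) (rule prob_space_normal_density, simp)
  interpret S: product_prob_space "\<lambda>_. stdN" by (rule product_prob_spaceI) (rule prob_stdN)
  have "distr (Zn n) (obs_space n) (shv n \<theta>) = PiM {1..n} ?M"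
  proof (rule P.PiM_eqI)
    show "sets (distr (Zn n) (obs_space n) (shv n \<theta>)) = sets (PiM {1..n} ?M)"
      unfolding obs_space_def by (auto intro!: sets_PiM_cong)
  next
    fix A assume A: "\<And>i. i \<in> {1..n} \<Longrightarrow> A i \<in> sets (?M i)"
    have Ab[measurable]: "i \<in> {1..n} \<Longrightarrow> A i \<in> sets borel" for i using A by simp
    have "emeasure (distr (Zn n) (obs_space n) (shv n \<theta>)) (Pi\<^sub>E {1..n} A)
        = emeasure (Zn n) (shv n \<theta> -` Pi\<^sub>E {1..n} A \<inter> space (Zn n))"
      by (rule emeasure_distr) (simp, unfold obs_space_def, intro sets_PiM_I_finite, auto)
    also have "shv n \<theta> -` Pi\<^sub>E {1..n} A \<inter> space (Zn n)
        = Pi\<^sub>E {1..n} (\<lambda>i. (\<lambda>x. x + mean_vec \<theta> i) -` A i \<inter> space stdN)"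
      unfolding Zn_def shv_def space_PiM by (auto simp: PiE_def Pi_def extensional_def)
    also have "emeasure (Zn n) \<dots> = (\<Prod>i\<in>{1..n}. emeasure stdN ((\<lambda>x. x + mean_vec \<theta> i) -` A i \<inter> space stdN))"
      unfolding Zn_def proof (rule S.emeasure_PiM)
      fix i assume "i \<in> {1..n}"
      then show "(\<lambda>x. x + mean_vec \<theta> i) -` A i \<inter> space stdN \<in> sets stdN"
        using measurable_sets_borel[OF _ Ab[of i], of "\<lambda>x. x + mean_vec \<theta> i"] by simp
    qed simp
    also have "\<dots> = (\<Prod>i\<in>{1..n}. emeasure (?M i) (A i))"
      by (intro prod.cong refl shift1 Ab) simp
    finally show "emeasure (distr (Zn n) (obs_space n) (shv n \<theta>)) (Pi\<^sub>E {1..n} A) = (\<Prod>i\<in>{1..n}. emeasure (?M i) (A i))" .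
  qed simp
  then show ?thesis unfolding Pcp_def by (rule sym)
qed

definition wt :: "nat \<Rightarrow> nat \<Rightarrow> nat \<Rightarrow> real" where
  "wt n t i = (if i \<le> t then sqrt (real (n - t) / (real t * real n)) else - sqrt (real t / (real (n - t) * real n)))"

lemma vdot_sum:
  assumes "t \<le> n"
  shows "vdot n t z = (\<Sum>i\<in>{1..n}. wt n t i * z i)"
proof -
  have "(\<Sum>i\<in>{1..n}. wt n t i * z i) = (\<Sum>i\<in>{1..t}. wt n t i * z i) + (\<Sum>i\<in>{t+1..n}. wt n t i * z i)"
    using sum.ub_add_nat[of 1 t "\<lambda>i. wt n t i * z i" "n - t"] assms by simp
  also have "(\<Sum>i\<in>{1..t}. wt n t i * z i) = (\<Sum>i=1..t. sqrt (real (n - t) / (real t * real n)) * z i)"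
    by (intro sum.cong) (auto simp: wt_def)
  also have "(\<Sum>i\<in>{t+1..n}. wt n t i * z i) = - (\<Sum>i=t+1..n. sqrt (real t / (real (n - t) * real n)) * z i)"
    by (subst sum_negf[symmetric], intro sum.cong) (auto simp: wt_def)
  finally show ?thesis by (simp add: vdot_def)
qed

lemma wt_sq:
  assumes "1 \<le> t" "t < n"
  shows "(\<Sum>i\<in>{1..n}. (wt n t i)\<^sup>2) = 1"
proof -
  have "(\<Sum>i\<in>{1..n}. (wt n t i)\<^sup>2) = (\<Sum>i\<in>{1..t}. (wt n t i)\<^sup>2) + (\<Sum>i\<in>{t+1..n}. (wt n t i)\<^sup>2)"
    using sum.ub_add_nat[of 1 t "\<lambda>i. (wt n t i)\<^sup>2" "n - t"] assms by simp
  also have "(\<Sum>i\<in>{1..t}. (wt n t i)\<^sup>2) = real t * (real (n - t) / (real t * real n))"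
    by (subst sum.cong[of _ _ _ "\<lambda>_. real (n - t) / (real t * real n)"]) (auto simp: wt_def)
  also have "(\<Sum>i\<in>{t+1..n}. (wt n t i)\<^sup>2) = real (n - t) * (real t / (real (n - t) * real n))"
    by (subst sum.cong[of _ _ _ "\<lambda>_. real t / (real (n - t) * real n)"]) (auto simp: wt_def)
  finally show ?thesis using assms by (simp add: field_simps of_nat_diff)
qed

lemma wt_nz: "1 \<le> t \<Longrightarrow> t < n \<Longrightarrow> wt n t i \<noteq> 0"
  by (auto simp: wt_def)

lemma vdot_distr:
  assumes t: "1 \<le> t" "t < n"
  shows "distributed (Zn n) lborel (vdot n t) std_normal_density"
proof -
  interpret Z: prob_space "Zn n" by (rule prob_Zn)
  have n: "{1..n} \<noteq> {}" using t by auto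
  have comp: "distr (Zn n) lborel (\<lambda>x. x i) = density lborel std_normal_density" if "i \<in> {1..n}" for i
  proof -
    have "distr (Zn n) lborel (\<lambda>x. x i) = distr (Zn n) stdN (\<lambda>x. x i)"
      by (rule distr_cong) auto
    also have "\<dots> = stdN" unfolding Zn_def
      by (rule distr_PiM_component[OF prob_stdN that])
    finally show ?thesis by (simp add: stdN_def)
  qed
  have dist: "distributed (Zn n) lborel (\<lambda>x. x i) std_normal_density" if "i \<in> {1..n}" for i
    unfolding distributed_def using comp[OF that] that by (auto simp: Zn_def)
  have ind0: "Z.indep_vars (\<lambda>_. stdN) (\<lambda>i x. x i) {1..n}"
  proof (subst Z.indep_vars_iff_distr_eq_PiM[OF n])
    show "(\<lambda>x. x i) \<in> measurable (Zn n) stdN" for i :: nat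
    proof (cases "i \<in> {1..n}")
      case True
      have "(\<lambda>x. x i) \<in> measurable (PiM {1..n} (\<lambda>_. stdN)) stdN"
        using True by (rule measurable_component_singleton)
      then show ?thesis by (simp add: Zn_def)
    next
      case False
      have "(\<lambda>x. x i) \<in> measurable (Zn n) stdN \<longleftrightarrow> (\<lambda>x. undefined) \<in> measurable (Zn n) stdN"
        by (rule measurable_cong) (use False in \<open>simp add: Zn_def space_PiM PiE_def extensional_def\<close>)
      moreover have "(\<lambda>x. undefined) \<in> measurable (Zn n) stdN" by (rule measurable_const) simp
      ultimately show ?thesis by blast
    qed
    have "distr (Zn n) (Pi\<^sub>M {1..n} (\<lambda>_. stdN)) (\<lambda>x. \<lambda>i\<in>{1..n}. x i) = distr (Zn n) (Zn n) (\<lambda>x. x)"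
      by (rule distr_cong) (auto simp: Zn_def space_PiM PiE_def extensional_def restrict_def)
    also have "\<dots> = Zn n" by simp
    also have "\<dots> = Pi\<^sub>M {1..n} (\<lambda>i. distr (Zn n) stdN (\<lambda>x. x i))"
      unfolding Zn_def by (intro PiM_cong refl distr_PiM_component[symmetric] prob_stdN) auto
    finally show "distr (Zn n) (Pi\<^sub>M {1..n} (\<lambda>_. stdN)) (\<lambda>x. \<lambda>i\<in>{1..n}. x i) = Pi\<^sub>M {1..n} (\<lambda>i. distr (Zn n) stdN (\<lambda>x. x i))" .
  qed
  have ind: "Z.indep_vars (\<lambda>_. borel) (\<lambda>i x. 0 + wt n t i * x i) {1..n}"
    by (rule Z.indep_vars_compose2[OF ind0]) simp
  have "distributed (Zn n) lborel (\<lambda>x. \<Sum>i\<in>{1..n}. 0 + wt n t i * x i)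
      (normal_density (\<Sum>i\<in>{1..n}. 0 + wt n t i * 0) (sqrt (\<Sum>i\<in>{1..n}. (\<bar>wt n t i\<bar> * 1)\<^sup>2)))"
  proof (rule Z.sum_indep_normal[OF _ n ind])
    fix i assume i: "i \<in> {1..n}"
    show "distributed (Zn n) lborel (\<lambda>x. 0 + wt n t i * x i) (normal_density (0 + wt n t i * 0) (\<bar>wt n t i\<bar> * 1))"
      by (rule Z.normal_density_affine[OF dist[OF i]]) (auto simp: wt_nz[OF t])
  qed (auto simp: wt_nz[OF t])
  moreover have "(\<lambda>x. \<Sum>i\<in>{1..n}. 0 + wt n t i * x i) = vdot n t"
    using t by (auto simp: vdot_sum)
  moreover have "sqrt (\<Sum>i\<in>{1..n}. (\<bar>wt n t i\<bar> * 1)\<^sup>2) = 1"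
    using wt_sq[OF t] by simp
  ultimately show ?thesis by simp
qed

lemma tail_Z:
  assumes t: "1 \<le> t" "t < n" and c: "0 \<le> c"
  shows "emeasure (Zn n) {z \<in> space (Zn n). c < \<bar>vdot n t z\<bar>} \<le> ennreal (exp (- c\<^sup>2 / 2))"
proof -
  have "{z \<in> space (Zn n). c < \<bar>vdot n t z\<bar>} = vdot n t -` {x. c < \<bar>x\<bar>} \<inter> space (Zn n)" by auto
  also have "emeasure (Zn n) \<dots> = (\<integral>\<^sup>+x. ennreal (std_normal_density x) * indicator {x. c < \<bar>x\<bar>} x \<partial>lborel)"
    by (rule distributed_emeasure[OF vdot_distr[OF t]]) measurable
  also have "\<dots> \<le> ennreal (exp (- c\<^sup>2 / 2))" by (rule gauss_tail[OF c])
  finally show ?thesis .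
qed

lemma Qn_facts:
  assumes n: "n \<ge> 2"
  obtains K where "1 \<le> K" "2 ^ K \<le> n" "n < 2 ^ (K + 1)" "\<lfloor>log 2 (real n)\<rfloor> = int K" "Qn n = K - 1"
proof -
  obtain K where K: "2 ^ K \<le> n" "n < 2 ^ (K + 1)"
    using ex_power_ivl1[of 2 n] n by auto
  have fl: "\<lfloor>log 2 (real n)\<rfloor> = int K"
    using floor_log_nat_eq_if[OF K] by simp
  have K1: "1 \<le> K"
  proof (rule ccontr)
    assume "\<not> 1 \<le> K" then have "K = 0" by simp
    with K n show False by simp
  qed
  have "log 2 (real n / 2) = log 2 (real n) - 1"
    using n by (simp add: log_divide)
  then have "\<lfloor>log 2 (real n / 2)\<rfloor> = int K - 1"
    using fl by simp
  then have "Qn n = K - 1" unfolding Qn_def using K1 by simp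
  with K K1 fl show ?thesis using that by blast
qed

lemma card_T0:
  assumes n: "n \<ge> 2"
  shows "real (card (T0 n)) \<le> 2 * real_of_int \<lfloor>log 2 (real n)\<rfloor>"
proof -
  obtain K where K: "1 \<le> K" "2 ^ K \<le> n" "n < 2 ^ (K + 1)" "\<lfloor>log 2 (real n)\<rfloor> = int K" "Qn n = K - 1"
    using Qn_facts[OF n] by blast
  have "T0 n = (\<lambda>q. 2 ^ q) ` {..Qn n} \<union> (\<lambda>q. n - 2 ^ q) ` {..Qn n}"
    unfolding T0_def by auto
  then have "card (T0 n) \<le> card ((\<lambda>q. 2 ^ q :: nat) ` {..Qn n}) + card ((\<lambda>q. n - 2 ^ q) ` {..Qn n})"
    by (simp add: card_Un_le)
  also have "\<dots> \<le> card {..Qn n} + card {..Qn n}"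
    by (intro add_mono card_image_le) auto
  also have "\<dots> = 2 * K" using K by simp
  finally show ?thesis using K by simp
qed

lemma T0_range:
  assumes n: "n \<ge> 2" and t: "t \<in> T0 n"
  shows "1 \<le> t" "t < n"
proof -
  obtain K where K: "1 \<le> K" "2 ^ K \<le> n" "n < 2 ^ (K + 1)" "\<lfloor>log 2 (real n)\<rfloor> = int K" "Qn n = K - 1"
    using Qn_facts[OF n] by blast
  obtain q where q: "q \<le> K - 1" "t = 2 ^ q \<or> t = n - 2 ^ q"
    using t K unfolding T0_def by auto
  define p where "p = (2::nat) ^ q"
  have "p \<le> 2 ^ (K - 1)" unfolding p_def using q by (intro power_increasing) auto
  moreover have "2 * (2::nat) ^ (K - 1) = 2 ^ K" using K by (cases K) auto
  ultimately have "2 * p \<le> n" using K by linarith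
  moreover have "1 \<le> p" unfolding p_def by simp
  moreover have "t = p \<or> t = n - p" using q p_def by simp
  ultimately show "1 \<le> t" "t < n" by auto
qed

lemma T0_finite: "finite (T0 n)"
  unfolding T0_def by auto

lemma T0_one: "1 \<in> T0 n"
  unfolding T0_def by (auto intro!: exI[of _ 0])

lemma in_T0_low:
  assumes n: "n \<ge> 2" and "2 * 2 ^ q \<le> n"
  shows "2 ^ q \<in> T0 n" "n - 2 ^ q \<in> T0 n"
proof -
  obtain K where K: "1 \<le> K" "2 ^ K \<le> n" "n < 2 ^ (K + 1)" "\<lfloor>log 2 (real n)\<rfloor> = int K" "Qn n = K - 1"
    using Qn_facts[OF n] by blast
  have "(2::nat) ^ (K + 1) = 2 * 2 ^ K" by simp
  then have "(2::nat) ^ q < 2 ^ K" using assms K by linarith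
  then have "q < K" by (simp add: power_strict_increasing_iff)
  then have "q \<le> Qn n" using K by simp
  then show "2 ^ q \<in> T0 n" "n - 2 ^ q \<in> T0 n" unfolding T0_def by auto
qed

lemma key_sqrt:
  assumes "1 \<le> t" "t < n"
  shows "real t * sqrt (real (n - t) / (real t * real n)) = real (n - t) * sqrt (real t / (real (n - t) * real n))"
proof -
  have a: "real t * sqrt (real (n - t) / (real t * real n)) = sqrt ((real t)\<^sup>2 * (real (n - t) / (real t * real n)))"
    by (subst real_sqrt_mult) simp
  have b: "real (n - t) * sqrt (real t / (real (n - t) * real n)) = sqrt ((real (n - t))\<^sup>2 * (real t / (real (n - t) * real n)))"
    by (subst real_sqrt_mult) simp
  have "(real t)\<^sup>2 * (real (n - t) / (real t * real n)) = (real (n - t))\<^sup>2 * (real t / (real (n - t) * real n))"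
    using assms by (simp add: power2_eq_square field_simps)
  then show ?thesis using a b by simp
qed

lemma mean_vdot_le:
  assumes "1 \<le> t" "t \<le> \<tau>" "\<tau> \<le> n" "t < n"
  shows "vdot n t (mean_vec (\<tau>, a, b)) = (a - b) * real (n - \<tau>) * sqrt (real t / (real (n - t) * real n))"
proof -
  define \<alpha> where "\<alpha> = sqrt (real (n - t) / (real t * real n))"
  define \<beta> where "\<beta> = sqrt (real t / (real (n - t) * real n))"
  have k: "real t * \<alpha> = real (n - t) * \<beta>" unfolding \<alpha>_def \<beta>_def using key_sqrt assms by simp
  have s1: "(\<Sum>i=1..t. \<alpha> * mean_vec (\<tau>, a, b) i) = real t * \<alpha> * a"
    using assms by (subst sum.cong[of _ _ _ "\<lambda>_. \<alpha> * a"]) (auto simp: mean_vec_def)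
  have "(\<Sum>i=t+1..n. \<beta> * mean_vec (\<tau>, a, b) i) = (\<Sum>i=t+1..\<tau>. \<beta> * mean_vec (\<tau>, a, b) i) + (\<Sum>i=\<tau>+1..n. \<beta> * mean_vec (\<tau>, a, b) i)"
    using sum.ub_add_nat[of "t+1" \<tau> "\<lambda>i. \<beta> * mean_vec (\<tau>, a, b) i" "n - \<tau>"] assms by simp
  also have "(\<Sum>i=t+1..\<tau>. \<beta> * mean_vec (\<tau>, a, b) i) = real (\<tau> - t) * \<beta> * a"
    by (subst sum.cong[of _ _ _ "\<lambda>_. \<beta> * a"]) (auto simp: mean_vec_def)
  also have "(\<Sum>i=\<tau>+1..n. \<beta> * mean_vec (\<tau>, a, b) i) = real (n - \<tau>) * \<beta> * b"
    by (subst sum.cong[of _ _ _ "\<lambda>_. \<beta> * b"]) (auto simp: mean_vec_def)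
  finally have s2: "(\<Sum>i=t+1..n. \<beta> * mean_vec (\<tau>, a, b) i) = real (\<tau> - t) * \<beta> * a + real (n - \<tau>) * \<beta> * b" .
  have "vdot n t (mean_vec (\<tau>, a, b)) = real t * \<alpha> * a - (real (\<tau> - t) * \<beta> * a + real (n - \<tau>) * \<beta> * b)"
    unfolding vdot_def using s1 s2 by (simp add: \<alpha>_def \<beta>_def)
  also have "\<dots> = real (n - t) * \<beta> * a - (real (\<tau> - t) * \<beta> * a + real (n - \<tau>) * \<beta> * b)"
    using k by simp
  also have "\<dots> = (a - b) * real (n - \<tau>) * \<beta>"
    using assms by (simp add: of_nat_diff algebra_simps)
  finally show ?thesis by (simp add: \<beta>_def)
qed

lemma mean_vdot_ge:
  assumes "1 \<le> \<tau>" "\<tau> \<le> t" "t < n"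
  shows "vdot n t (mean_vec (\<tau>, a, b)) = (a - b) * real \<tau> * sqrt (real (n - t) / (real t * real n))"
proof -
  define \<alpha> where "\<alpha> = sqrt (real (n - t) / (real t * real n))"
  define \<beta> where "\<beta> = sqrt (real t / (real (n - t) * real n))"
  have k: "real t * \<alpha> = real (n - t) * \<beta>" unfolding \<alpha>_def \<beta>_def using key_sqrt assms by simp
  have "(\<Sum>i=1..t. \<alpha> * mean_vec (\<tau>, a, b) i) = (\<Sum>i=1..\<tau>. \<alpha> * mean_vec (\<tau>, a, b) i) + (\<Sum>i=\<tau>+1..t. \<alpha> * mean_vec (\<tau>, a, b) i)"
    using sum.ub_add_nat[of 1 \<tau> "\<lambda>i. \<alpha> * mean_vec (\<tau>, a, b) i" "t - \<tau>"] assms by simp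
  also have "(\<Sum>i=1..\<tau>. \<alpha> * mean_vec (\<tau>, a, b) i) = real \<tau> * \<alpha> * a"
    by (subst sum.cong[of _ _ _ "\<lambda>_. \<alpha> * a"]) (auto simp: mean_vec_def)
  also have "(\<Sum>i=\<tau>+1..t. \<alpha> * mean_vec (\<tau>, a, b) i) = real (t - \<tau>) * \<alpha> * b"
    by (subst sum.cong[of _ _ _ "\<lambda>_. \<alpha> * b"]) (auto simp: mean_vec_def)
  finally have s1: "(\<Sum>i=1..t. \<alpha> * mean_vec (\<tau>, a, b) i) = real \<tau> * \<alpha> * a + real (t - \<tau>) * \<alpha> * b" .
  have s2: "(\<Sum>i=t+1..n. \<beta> * mean_vec (\<tau>, a, b) i) = real (n - t) * \<beta> * b"
    using assms by (subst sum.cong[of _ _ _ "\<lambda>_. \<beta> * b"]) (auto simp: mean_vec_def)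
  have "vdot n t (mean_vec (\<tau>, a, b)) = real \<tau> * \<alpha> * a + real (t - \<tau>) * \<alpha> * b - real (n - t) * \<beta> * b"
    unfolding vdot_def using s1 s2 by (simp add: \<alpha>_def \<beta>_def)
  also have "\<dots> = real \<tau> * \<alpha> * a + real (t - \<tau>) * \<alpha> * b - real t * \<alpha> * b"
    using k by simp
  also have "\<dots> = (a - b) * real \<tau> * \<alpha>"
    using assms by (simp add: of_nat_diff algebra_simps)
  finally show ?thesis by (simp add: \<alpha>_def)
qed

lemma key_ineq:
  fixes N T t :: real
  assumes "0 \<le> T" "T \<le> 2 * t" "2 * T \<le> N"
  shows "T * (N - t) \<le> 3 * (N - T) * t"
proof -
  have f1: "(T / 2) * (3 * N - 2 * T) \<le> t * (3 * N - 2 * T)"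
    using assms by (intro mult_right_mono) auto
  have f2: "0 \<le> T * (N - 2 * T)" using assms by simp
  show ?thesis using f1 f2 by (simp add: algebra_simps)
qed

lemma less_abs_sq: "0 \<le> (y::real) \<Longrightarrow> y\<^sup>2 < x\<^sup>2 \<Longrightarrow> y < \<bar>x\<bar>"
  by (metis abs_ge_zero power2_abs power_less_imp_less_base)

lemma fin_ineq1:
  fixes N T t D B :: real
  assumes "0 < N" "T < N" "0 \<le> D" "t < N"
    and h: "B\<^sup>2 < D * T * (N - T) / N\<^sup>2" and k: "T * (N - t) \<le> 3 * (N - T) * t"
  shows "B\<^sup>2 * N / 3 < D * (N - T)\<^sup>2 * t / ((N - t) * N)"
proof -
  have "B\<^sup>2 * N / 3 < (D * T * (N - T) / N\<^sup>2) * N / 3"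
    using h assms by (intro divide_strict_right_mono mult_strict_right_mono) auto
  also have "\<dots> = D * T * (N - T) / (3 * N)"
    using assms by (simp add: power2_eq_square field_simps)
  also have "\<dots> \<le> D * (N - T)\<^sup>2 * t / ((N - t) * N)"
  proof -
    have e: "D * (N - T)\<^sup>2 * t / ((N - t) * N) - D * T * (N - T) / (3 * N)
        = (D * (N - T) / (3 * N * (N - t))) * (3 * (N - T) * t - T * (N - t))"
      using assms by (simp add: power2_eq_square field_simps)
    have "0 \<le> (D * (N - T) / (3 * N * (N - t))) * (3 * (N - T) * t - T * (N - t))"
      using assms k by (intro mult_nonneg_nonneg divide_nonneg_pos) auto
    then show ?thesis using e by simp
  qed
  finally show ?thesis .
qed

lemma fin_ineq2:
  fixes N T t D B :: real
  assumes "0 < N" "T < N" "0 \<le> D" "0 < t" "0 \<le> T"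
    and h: "B\<^sup>2 < D * T * (N - T) / N\<^sup>2" and k: "(N - T) * t \<le> 3 * T * (N - t)"
  shows "B\<^sup>2 * N / 3 < D * T\<^sup>2 * (N - t) / (t * N)"
proof -
  have "B\<^sup>2 * N / 3 < (D * T * (N - T) / N\<^sup>2) * N / 3"
    using h assms by (intro divide_strict_right_mono mult_strict_right_mono) auto
  also have "\<dots> = D * T * (N - T) / (3 * N)"
    using assms by (simp add: power2_eq_square field_simps)
  also have "\<dots> \<le> D * T\<^sup>2 * (N - t) / (t * N)"
  proof -
    have e: "D * T\<^sup>2 * (N - t) / (t * N) - D * T * (N - T) / (3 * N)
        = (D * T / (3 * N * t)) * (3 * T * (N - t) - (N - T) * t)"
      using assms by (simp add: power2_eq_square field_simps)
    have "0 \<le> (D * T / (3 * N * t)) * (3 * T * (N - t) - (N - T) * t)"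
      using assms k by (intro mult_nonneg_nonneg divide_nonneg_pos) auto
    then show ?thesis using e by simp
  qed
  finally show ?thesis .
qed

lemma alt_good:
  assumes n: "n \<ge> 2" and B: "B > 0" and th: "(\<tau>, a, b) \<in> Theta n B" and ab: "a \<noteq> b"
  shows "\<exists>t\<in>T0 n. B * sqrt (3 * real n) / 3 < \<bar>vdot n t (mean_vec (\<tau>, a, b))\<bar>"
proof -
  define N where "N = real n"
  define T where "T = real \<tau>"
  define D where "D = (a - b)\<^sup>2"
  have tau: "1 \<le> \<tau>" "\<tau> < n" using th n unfolding Theta_def by auto
  have NT: "real (n - \<tau>) = N - T" using tau by (simp add: N_def T_def of_nat_diff)
  have Npos: "0 < N" "T < N" "1 \<le> T" using tau n by (auto simp: N_def T_def)
  define s where "s = \<bar>a - b\<bar> * sqrt (T * (N - T)) / N"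
  have "s = 0 \<or> s > B" using th tau unfolding Theta_def s_def Let_def by (auto simp: NT N_def T_def)
  moreover have "s \<noteq> 0" using ab Npos unfolding s_def by auto
  ultimately have sB: "B < s" by simp
  have "B\<^sup>2 < s\<^sup>2" using sB B by (intro power_strict_mono) auto
  also have "s\<^sup>2 = D * T * (N - T) / N\<^sup>2"
    unfolding s_def D_def using Npos by (simp add: power_divide power_mult_distrib)
  finally have hB: "B\<^sup>2 < D * T * (N - T) / N\<^sup>2" .
  have lhs: "(B * sqrt (3 * real n) / 3)\<^sup>2 = B\<^sup>2 * N / 3"
    by (simp add: power_divide power_mult_distrib N_def)
  have D0: "0 \<le> D" unfolding D_def by simp
  show ?thesis
  proof (cases "2 * \<tau> \<le> n")
    case True
    obtain q where q: "2 ^ q \<le> \<tau>" "\<tau> < 2 ^ (q + 1)" using ex_power_ivl1[of 2 \<tau>] tau by auto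
    define t where "t = (2::nat) ^ q"
    have tT: "t \<in> T0 n" unfolding t_def using in_T0_low(1)[OF n, of q] q True by simp
    have t1: "1 \<le> t" "t < n" using T0_range[OF n tT] by auto
    have tle: "t \<le> \<tau>" "\<tau> < 2 * t" using q by (auto simp: t_def)
    have ntr: "real (n - t) = N - real t" using t1 by (simp add: N_def of_nat_diff)
    have v: "vdot n t (mean_vec (\<tau>, a, b)) = (a - b) * (N - T) * sqrt (real t / ((N - real t) * N))"
      using mean_vdot_le[OF t1(1) tle(1) _ t1(2), of a b] tau by (simp add: NT ntr N_def)
    have v2: "(vdot n t (mean_vec (\<tau>, a, b)))\<^sup>2 = D * (N - T)\<^sup>2 * real t / ((N - real t) * N)"
      unfolding v D_def using t1 Npos by (simp add: power_mult_distrib N_def)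
    have ineq: "B\<^sup>2 * N / 3 < D * (N - T)\<^sup>2 * real t / ((N - real t) * N)"
    proof (rule fin_ineq1[OF Npos(1,2) D0 _ hB])
      show "real t < N" using t1 by (simp add: N_def)
      show "T * (N - real t) \<le> 3 * (N - T) * real t"
        using key_ineq[of T "real t" N] tle True by (simp add: N_def T_def)
    qed
    have "(B * sqrt (3 * real n) / 3)\<^sup>2 < (vdot n t (mean_vec (\<tau>, a, b)))\<^sup>2"
      by (simp only: lhs v2 ineq)
    then have "B * sqrt (3 * real n) / 3 < \<bar>vdot n t (mean_vec (\<tau>, a, b))\<bar>"
      using B by (intro less_abs_sq) auto
    then show ?thesis using tT by blast
  next
    case False
    have sig: "1 \<le> n - \<tau>" using tau by simp
    obtain q where q: "2 ^ q \<le> n - \<tau>" "n - \<tau> < 2 ^ (q + 1)" using ex_power_ivl1[of 2 "n - \<tau>"] sig by auto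
    define t where "t = n - (2::nat) ^ q"
    have tT: "t \<in> T0 n" unfolding t_def using in_T0_low(2)[OF n, of q] q False by simp
    have t1: "1 \<le> t" "t < n" using T0_range[OF n tT] by auto
    have tle: "\<tau> \<le> t" using q by (auto simp: t_def)
    have ntr: "real (n - t) = N - real t" using t1 by (simp add: N_def of_nat_diff)
    have v: "vdot n t (mean_vec (\<tau>, a, b)) = (a - b) * T * sqrt ((N - real t) / (real t * N))"
      using mean_vdot_ge[OF tau(1) tle t1(2), of a b] by (simp add: T_def ntr N_def)
    have v2: "(vdot n t (mean_vec (\<tau>, a, b)))\<^sup>2 = D * T\<^sup>2 * (N - real t) / (real t * N)"
      unfolding v D_def using t1 Npos by (simp add: power_mult_distrib N_def)
    have ineq: "B\<^sup>2 * N / 3 < D * T\<^sup>2 * (N - real t) / (real t * N)"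
    proof (rule fin_ineq2[OF Npos(1,2) D0 _ _ hB])
      show "0 < real t" using t1 by simp
      show "0 \<le> T" by (simp add: T_def)
      have e1: "N - real t = real ((2::nat) ^ q)" using q t1 by (simp add: t_def N_def of_nat_diff)
      have e2: "N - T = real (n - \<tau>)" using NT by simp
      have "n - \<tau> \<le> 2 * 2 ^ q" using q(2) by simp
      then have r1: "real (n - \<tau>) \<le> 2 * real ((2::nat) ^ q)"
        by (metis of_nat_le_iff of_nat_mult of_nat_numeral)
      have "(N - T) * (N - (N - real t)) \<le> 3 * (N - (N - T)) * (N - real t)"
        using key_ineq[of "N - T" "N - real t" N] r1 False unfolding e1 e2
        by (simp add: N_def)
      then show "(N - T) * real t \<le> 3 * T * (N - real t)" by simp
    qed
    have "(B * sqrt (3 * real n) / 3)\<^sup>2 < (vdot n t (mean_vec (\<tau>, a, b)))\<^sup>2"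
      by (simp only: lhs v2 ineq)
    then have "B * sqrt (3 * real n) / 3 < \<bar>vdot n t (mean_vec (\<tau>, a, b))\<bar>"
      using B by (intro less_abs_sq) auto
    then show ?thesis using tT by blast
  qed
qed

lemma vdot_shv:
  assumes "t \<le> n"
  shows "vdot n t (shv n \<theta> z) = vdot n t z + vdot n t (mean_vec \<theta>)"
proof -
  have "vdot n t (shv n \<theta> z) = (\<Sum>i\<in>{1..n}. wt n t i * z i + wt n t i * mean_vec \<theta> i)"
    unfolding vdot_sum[OF assms] by (intro sum.cong) (auto simp: shv_def distrib_left)
  also have "\<dots> = vdot n t z + vdot n t (mean_vec \<theta>)"
    unfolding vdot_sum[OF assms] by (simp add: sum.distrib)
  finally show ?thesis .
qed

lemma h_iff:
  "h_cusum n lam x \<longleftrightarrow> (\<exists>t\<in>T0 n. lam < \<bar>vdot n t x\<bar>)"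
proof -
  have "finite ((\<lambda>t. \<bar>vdot n t x\<bar>) ` T0 n)" "(\<lambda>t. \<bar>vdot n t x\<bar>) ` T0 n \<noteq> {}"
    using T0_finite T0_one by auto
  then show ?thesis unfolding h_cusum_def by (simp add: Max_gr_iff)
qed

lemma vdot_meas_Z:
  assumes "1 \<le> t" "t < n"
  shows "vdot n t \<in> borel_measurable (Zn n)"
  using distributed_measurable[OF vdot_distr[OF assms]] by simp

lemma per_theta:
  assumes n: "n \<ge> 2" and B: "B > 0" and th: "\<theta> \<in> Theta n B"
  shows "emeasure (Zn n) {z \<in> space (Zn n). h_cusum n (B * sqrt (3 * real n) / 6) (shv n \<theta> z) \<noteq> label \<theta>}
    \<le> ennreal (2 * real_of_int \<lfloor>log 2 (real n)\<rfloor> * exp (- real n * B\<^sup>2 / 24))"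
proof -
  obtain \<tau> a b where \<theta>: "\<theta> = (\<tau>, a, b)" by (cases \<theta>)
  define lam where "lam = B * sqrt (3 * real n) / 6"
  define e where "e = exp (- real n * B\<^sup>2 / 24)"
  define L where "L = real_of_int \<lfloor>log 2 (real n)\<rfloor>"
  have lam0: "0 \<le> lam" using B by (simp add: lam_def)
  have ex: "exp (- lam\<^sup>2 / 2) = e"
    unfolding lam_def e_def by (simp add: power_divide power_mult_distrib)
  obtain K where K: "1 \<le> K" "\<lfloor>log 2 (real n)\<rfloor> = int K"
    using Qn_facts[OF n] by metis
  have L1: "1 \<le> L" using K by (simp add: L_def)
  have e0: "0 \<le> e" by (simp add: e_def)
  have tau: "1 \<le> \<tau>" "\<tau> < n" using th n unfolding Theta_def \<theta> by auto
  define E where "E = (\<lambda>t. {z \<in> space (Zn n). lam < \<bar>vdot n t z\<bar>})"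
  have tail: "emeasure (Zn n) (E t) \<le> ennreal e" if "t \<in> T0 n" for t
    unfolding E_def ex[symmetric] using tail_Z[OF T0_range[OF n that] lam0] .
  have Es: "E t \<in> sets (Zn n)" if "t \<in> T0 n" for t
  proof -
    have [measurable]: "vdot n t \<in> borel_measurable (Zn n)" using vdot_meas_Z T0_range[OF n that] by blast
    show ?thesis unfolding E_def by measurable
  qed
  have hs: "h_cusum n lam (shv n \<theta> z) \<longleftrightarrow> (\<exists>t\<in>T0 n. lam < \<bar>vdot n t z + vdot n t (mean_vec \<theta>)\<bar>)" for z
    unfolding h_iff using vdot_shv T0_range[OF n] by (metis less_imp_le)
  show ?thesis
  proof (cases "a = b")
    case True
    have m0: "vdot n t (mean_vec \<theta>) = 0" if "t \<in> T0 n" for t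
    proof (cases "t \<le> \<tau>")
      case True
      then show ?thesis using mean_vdot_le[OF T0_range(1)[OF n that] True _ T0_range(2)[OF n that]] tau \<open>a = b\<close>
        by (simp add: \<theta>)
    next
      case False
      then show ?thesis using mean_vdot_ge[OF tau(1) _ T0_range(2)[OF n that]] \<open>a = b\<close>
        by (simp add: \<theta>)
    qed
    have "{z \<in> space (Zn n). h_cusum n lam (shv n \<theta> z) \<noteq> label \<theta>} = (\<Union>t\<in>T0 n. E t)"
      using True m0 unfolding hs E_def by (auto simp: label_def \<theta>)
    then have "emeasure (Zn n) {z \<in> space (Zn n). h_cusum n lam (shv n \<theta> z) \<noteq> label \<theta>}
        \<le> (\<Sum>t\<in>T0 n. emeasure (Zn n) (E t))"
      using emeasure_subadditive_finite[OF T0_finite[of n], where A=E and M="Zn n"] Es by auto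
    also have "\<dots> \<le> (\<Sum>t\<in>T0 n. ennreal e)"
      by (intro sum_mono tail)
    also have "\<dots> = ennreal (real (card (T0 n)) * e)"
      using e0 by (simp add: ennreal_mult ennreal_of_nat_eq_real_of_nat)
    also have "\<dots> \<le> ennreal (2 * L * e)"
      using card_T0[OF n] e0 by (intro ennreal_leI mult_right_mono) (auto simp: L_def)
    finally show ?thesis by (simp add: lam_def L_def e_def)
  next
    case False
    obtain t where t: "t \<in> T0 n" "B * sqrt (3 * real n) / 3 < \<bar>vdot n t (mean_vec \<theta>)\<bar>"
      using alt_good[OF n B th[unfolded \<theta>] False] \<theta> by blast
    have t2: "2 * lam < \<bar>vdot n t (mean_vec \<theta>)\<bar>" using t by (simp add: lam_def)
    have "{z \<in> space (Zn n). h_cusum n lam (shv n \<theta> z) \<noteq> label \<theta>} \<subseteq> E t"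
    proof
      fix z assume z: "z \<in> {z \<in> space (Zn n). h_cusum n lam (shv n \<theta> z) \<noteq> label \<theta>}"
      then have "\<not> h_cusum n lam (shv n \<theta> z)" using False by (auto simp: label_def \<theta>)
      then have "\<bar>vdot n t z + vdot n t (mean_vec \<theta>)\<bar> \<le> lam" using hs t(1) by auto
      then have "lam < \<bar>vdot n t z\<bar>" using t2 by linarith
      then show "z \<in> E t" using z by (simp add: E_def)
    qed
    then have "emeasure (Zn n) {z \<in> space (Zn n). h_cusum n lam (shv n \<theta> z) \<noteq> label \<theta>} \<le> emeasure (Zn n) (E t)"
      using Es[OF t(1)] by (rule emeasure_mono)
    also have "\<dots> \<le> ennreal e" by (rule tail[OF t(1)])
    also have "\<dots> \<le> ennreal (2 * L * e)"
      using L1 e0 by (intro ennreal_leI) (simp add: mult_le_cancel_right1 mult_right_mono order_trans[OF _ mult_right_mono[of 1 "2*L" e]])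
    finally show ?thesis by (simp add: lam_def L_def e_def)
  qed
qed

lemma space_param: "space param_space = UNIV"
  by (simp add: param_space_def space_pair_measure)

lemma mean_vec_meas: "(\<lambda>\<theta>. mean_vec \<theta> i) \<in> borel_measurable param_space"
proof -
  have eq: "(\<lambda>\<theta>. mean_vec \<theta> i) = (\<lambda>\<theta>. if i \<le> fst \<theta> then fst (snd \<theta>) else snd (snd \<theta>))"
    by (auto simp: mean_vec_def split: prod.splits)
  have s: "{\<theta> \<in> space param_space. i \<le> fst \<theta>} \<in> sets param_space"
  proof -
    have "fst -` {i..} \<inter> space param_space \<in> sets param_space"
      unfolding param_space_def by (rule measurable_sets[OF measurable_fst]) simp
    moreover have "fst -` {i..} \<inter> space param_space = {\<theta> \<in> space param_space. i \<le> fst \<theta>}" by auto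
    ultimately show ?thesis by simp
  qed
  show ?thesis unfolding eq
    by (rule measurable_If[OF _ _ s]) (simp_all add: param_space_def)
qed

lemma label_meas: "label \<in> measurable param_space (count_space UNIV)"
proof -
  have eq: "label = (\<lambda>\<theta>. fst (snd \<theta>) \<noteq> snd (snd \<theta>))"
    by (auto simp: label_def split: prod.splits)
  show ?thesis unfolding eq param_space_def by measurable
qed

lemma vdot_meas_obs:
  assumes "t \<le> n"
  shows "vdot n t \<in> borel_measurable (obs_space n)"
proof -
  have "(\<lambda>z. \<Sum>i\<in>{1..n}. wt n t i * z i) \<in> borel_measurable (obs_space n)"
    unfolding obs_space_def by measurable
  moreover have "vdot n t = (\<lambda>z. \<Sum>i\<in>{1..n}. wt n t i * z i)"
    using vdot_sum[OF assms] by auto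
  ultimately show ?thesis by simp
qed

lemma h_meas: "n \<ge> 2 \<Longrightarrow> h_cusum n lam \<in> measurable (obs_space n) (count_space UNIV)"
proof -
  assume n: "n \<ge> 2"
  have [measurable]: "(\<lambda>x. Max ((\<lambda>t. \<bar>vdot n t x\<bar>) ` T0 n)) \<in> borel_measurable (obs_space n)"
  proof (rule borel_measurable_Max[OF T0_finite])
    fix t assume "t \<in> T0 n"
    then have [measurable]: "vdot n t \<in> borel_measurable (obs_space n)"
      using vdot_meas_obs T0_range[OF n] by (meson less_imp_le)
    show "(\<lambda>x. \<bar>vdot n t x\<bar>) \<in> borel_measurable (obs_space n)" by measurable
  qed
  have "(\<lambda>x. lam < Max ((\<lambda>t. \<bar>vdot n t x\<bar>) ` T0 n)) \<in> measurable (obs_space n) (count_space UNIV)"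
    by measurable
  then show ?thesis unfolding h_cusum_def[abs_def] .
qed

theorem corollaryA3:
  fixes n :: nat and B :: real and \<pi>0 :: "param measure"
  assumes "n \<ge> 2" and "B > 0"
    and "prob_space \<pi>0" and "sets \<pi>0 = sets param_space"
    and "AE \<theta> in \<pi>0. \<theta> \<in> Theta n B"
  shows "measure (joint n \<pi>0)
           {p \<in> space (joint n \<pi>0). h_cusum n (B * sqrt (3 * real n) / 6) (snd p) \<noteq> label (fst p)}
         \<le> 2 * real_of_int \<lfloor>log 2 (real n)\<rfloor> * exp (- real n * B\<^sup>2 / 24)"
proof -
  interpret P0: prob_space \<pi>0 by fact
  define lam where "lam = B * sqrt (3 * real n) / 6"
  define c where "c = 2 * real_of_int \<lfloor>log 2 (real n)\<rfloor> * exp (- real n * B\<^sup>2 / 24)"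
  have c0: "0 \<le> c"
  proof -
    have "0 \<le> log 2 (real n)" using assms(1) by simp
    then show ?thesis unfolding c_def by simp
  qed
  have sp: "space \<pi>0 = UNIV"
    using sets_eq_imp_space_eq[OF assms(4)] space_param by simp
  have ne: "space \<pi>0 \<noteq> {}" by (simp add: sp)
  have mv[measurable]: "(\<lambda>\<theta>. mean_vec \<theta> i) \<in> borel_measurable \<pi>0" for i
    using mean_vec_meas measurable_cong_sets[OF assms(4) refl] by blast
  have lm[measurable]: "label \<in> measurable \<pi>0 (count_space UNIV)"
    using label_meas measurable_cong_sets[OF assms(4) refl] by blast
  have hm[measurable]: "h_cusum n lam \<in> measurable (obs_space n) (count_space UNIV)"
    using h_meas assms(1) by blast
  define Kr where "Kr = (\<lambda>\<theta>. distr (Zn n) (\<pi>0 \<Otimes>\<^sub>M obs_space n) (\<lambda>z. (\<theta>, shv n \<theta> z)))"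
  have f_meas: "(\<lambda>(\<theta>, z). (\<theta>, shv n \<theta> z)) \<in> measurable (\<pi>0 \<Otimes>\<^sub>M Zn n) (\<pi>0 \<Otimes>\<^sub>M obs_space n)"
    unfolding shv_def Zn_def obs_space_def by measurable
  have Zsp: "Zn n \<in> space (subprob_algebra (Zn n))"
    using prob_Zn[of n] by (simp add: space_subprob_algebra prob_space_imp_subprob_space)
  have Kmeas: "Kr \<in> measurable \<pi>0 (subprob_algebra (\<pi>0 \<Otimes>\<^sub>M obs_space n))"
    unfolding Kr_def
    by (rule measurable_distr2[where f="\<lambda>\<theta> z. (\<theta>, shv n \<theta> z)" and g="\<lambda>_. Zn n", OF f_meas measurable_const[OF Zsp]])
  have jeq: "joint n \<pi>0 = \<pi>0 \<bind> Kr"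
    unfolding joint_def Kr_def
  proof (rule bind_cong[OF refl])
    fix \<theta> assume th: "\<theta> \<in> space \<pi>0"
    have "distr (Pcp n \<theta>) (\<pi>0 \<Otimes>\<^sub>M obs_space n) (Pair \<theta>)
        = distr (distr (Zn n) (obs_space n) (shv n \<theta>)) (\<pi>0 \<Otimes>\<^sub>M obs_space n) (Pair \<theta>)"
      by (simp add: Pcp_eq)
    also have "\<dots> = distr (Zn n) (\<pi>0 \<Otimes>\<^sub>M obs_space n) (Pair \<theta> \<circ> shv n \<theta>)"
      by (rule distr_distr[OF measurable_Pair1'[OF th] shv_meas])
    finally show "distr (Pcp n \<theta>) (\<pi>0 \<Otimes>\<^sub>M obs_space n) (\<lambda>x. (\<theta>, x)) = distr (Zn n) (\<pi>0 \<Otimes>\<^sub>M obs_space n) (\<lambda>z. (\<theta>, shv n \<theta> z))"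
      by (simp add: comp_def)
  qed
  have spj: "space (joint n \<pi>0) = space (\<pi>0 \<Otimes>\<^sub>M obs_space n)"
    unfolding jeq using space_bind_measurable[OF Kmeas ne] .
  define S where "S = {p \<in> space (\<pi>0 \<Otimes>\<^sub>M obs_space n). h_cusum n lam (snd p) \<noteq> label (fst p)}"
  have S_sets: "S \<in> sets (\<pi>0 \<Otimes>\<^sub>M obs_space n)"
    unfolding S_def by measurable
  have em: "emeasure (joint n \<pi>0) S = (\<integral>\<^sup>+\<theta>. emeasure (Kr \<theta>) S \<partial>\<pi>0)"
    unfolding jeq by (rule emeasure_bind[OF ne Kmeas S_sets])
  have Kth: "emeasure (Kr \<theta>) S = emeasure (Zn n) {z \<in> space (Zn n). h_cusum n lam (shv n \<theta> z) \<noteq> label \<theta>}" for \<theta>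
  proof -
    have m: "(\<lambda>z. (\<theta>, shv n \<theta> z)) \<in> measurable (Zn n) (\<pi>0 \<Otimes>\<^sub>M obs_space n)"
      by (rule measurable_Pair) (auto simp: sp)
    have "emeasure (Kr \<theta>) S = emeasure (Zn n) ((\<lambda>z. (\<theta>, shv n \<theta> z)) -` S \<inter> space (Zn n))"
      unfolding Kr_def by (rule emeasure_distr[OF m S_sets])
    also have "(\<lambda>z. (\<theta>, shv n \<theta> z)) -` S \<inter> space (Zn n) = {z \<in> space (Zn n). h_cusum n lam (shv n \<theta> z) \<noteq> label \<theta>}"
      using measurable_space[OF shv_meas[of n \<theta>]] by (auto simp: S_def space_pair_measure sp)
    finally show ?thesis .
  qed
  have "emeasure (joint n \<pi>0) S \<le> (\<integral>\<^sup>+\<theta>. ennreal c \<partial>\<pi>0)"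
    unfolding em
  proof (rule nn_integral_mono_AE)
    show "AE \<theta> in \<pi>0. emeasure (Kr \<theta>) S \<le> ennreal c"
      using assms(5)
    proof eventually_elim
      case (elim \<theta>)
      show ?case unfolding Kth c_def lam_def by (rule per_theta[OF assms(1,2) elim])
    qed
  qed
  also have "\<dots> = ennreal c" by (simp add: P0.emeasure_space_1)
  finally have le: "emeasure (joint n \<pi>0) S \<le> ennreal c" .
  have "{p \<in> space (joint n \<pi>0). h_cusum n (B * sqrt (3 * real n) / 6) (snd p) \<noteq> label (fst p)} = S"
    unfolding S_def spj lam_def ..
  then show ?thesis
    using le c0 unfolding c_def measure_def by (simp add: enn2real_leI)
qed

end
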